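(* Let $K\in\mathbb{N}$, $f_1,\dots,f_K\in\mathcal{S}'(\mathbb{Z}^{d})$, and let $\langle f_1,\dots,f_K\rangle$ be the ideal of $\mathcal{S}'(\mathbb{Z}^{d})$ they generate. Then $f\in\mathcal{S}'(\mathbb{Z}^{d})$ belongs to $\langle f_1,\dots,f_K\rangle$ if and only if there exist a real $M>0$ and a nonnegative integer $m$ such that $$|f(\mathbf{n})|\leq M(1+\|\mathbf{n}\|)^m\sum_{k=1}^K|f_k(\mathbf{n})|\quad\text{for all }\mathbf{n}\in\mathbb{Z}^d.$$
   Context: For $\mathbf{n}=(n_1,\dots,n_d)\in\mathbb{Z}^d$ write $\|\mathbf{n}\|:=|n_1|+\cdots+|n_d|$. $\mathcal{S}'(\mathbb{Z}^{d})$ denotes the set of all maps $f:\mathbb{Z}^d\to\mathbb{C}$ of at most polynomial growth, i.e. for which there exist a real $M>0$ and an integer $m\geq 0$ with $|f(\mathbf{n})|\leq M(1+\|\mathbf{n}\|)^m$ for all $\mathbf{n}\in\mathbb{Z}^d$. It is a commutative unital ring under pointwise addition and multiplication, with unit the constant function $1$. *)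

theory Defs
  imports "HOL-Analysis.Analysis"
begin

text \<open>Lattice points of Z^d are modelled as functions from a finite index type 'd to int.\<close>

definition l1norm :: "('d::finite \<Rightarrow> int) \<Rightarrow> real" where
  "l1norm n = (\<Sum>i\<in>UNIV. real_of_int \<bar>n i\<bar>)"

definition Sprime :: "(('d::finite \<Rightarrow> int) \<Rightarrow> complex) set" where
  "Sprime = {f. \<exists>M::real. \<exists>m::nat. M > 0 \<and>
      (\<forall>n. cmod (f n) \<le> M * (1 + l1norm n) ^ m)}"

definition gen_ideal :: "nat \<Rightarrow> (nat \<Rightarrow> ('d::finite \<Rightarrow> int) \<Rightarrow> complex)
      \<Rightarrow> (('d \<Rightarrow> int) \<Rightarrow> complex) set" where
  "gen_ideal K fs = {f. \<exists>g. (\<forall>k\<in>{1..K}. g k \<in> Sprime) \<and>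
      f = (\<lambda>n. \<Sum>k=1..K. g k n * fs k n)}"

end

theory Submission
  imports Defs
begin

lemma l1norm_nonneg: "l1norm n \<ge> 0"
  unfolding l1norm_def by (intro sum_nonneg) auto

lemma pow_mono1: "m \<le> m' \<Longrightarrow> (1 + l1norm n) ^ m \<le> (1 + l1norm n) ^ m'"
  using l1norm_nonneg[of n] by (intro power_increasing) auto

theorem proposition2p3:
  fixes K :: nat
    and fs :: "nat \<Rightarrow> ('d::finite \<Rightarrow> int) \<Rightarrow> complex"
    and f :: "('d \<Rightarrow> int) \<Rightarrow> complex"
  assumes "\<forall>k\<in>{1..K}. fs k \<in> Sprime"
    and "f \<in> Sprime"
  shows "f \<in> gen_ideal K fs \<longleftrightarrow>
    (\<exists>M::real. \<exists>m::nat. M > 0 \<and>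
      (\<forall>n. cmod (f n) \<le> M * (1 + l1norm n) ^ m * (\<Sum>k=1..K. cmod (fs k n))))"
proof
  assume "f \<in> gen_ideal K fs"
  then obtain g where g: "\<forall>k\<in>{1..K}. g k \<in> Sprime" and f: "f = (\<lambda>n. \<Sum>k=1..K. g k n * fs k n)"
    unfolding gen_ideal_def by auto
  have "\<forall>k\<in>{1..K}. \<exists>Mm. fst Mm > 0 \<and> (\<forall>n. cmod (g k n) \<le> fst Mm * (1 + l1norm n) ^ snd Mm)"
    using g unfolding Sprime_def by auto
  then obtain Mm where Mm: "\<And>k. k\<in>{1..K} \<Longrightarrow> fst (Mm k) > 0 \<and> (\<forall>n. cmod (g k n) \<le> fst (Mm k) * (1 + l1norm n) ^ snd (Mm k))"
    by metis
  define Mt where "Mt = 1 + (\<Sum>k=1..K. fst (Mm k))"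
  define mt where "mt = Max (insert 0 ((\<lambda>k. snd (Mm k)) ` {1..K}))"
  have Mt: "Mt > 0" unfolding Mt_def using Mm by (smt (verit) sum_nonneg)
  have Mk: "fst (Mm k) \<le> Mt" if "k \<in> {1..K}" for k
  proof -
    have "fst (Mm k) \<le> (\<Sum>k=1..K. fst (Mm k))"
      using that Mm by (intro member_le_sum) (auto intro: less_imp_le)
    thus ?thesis unfolding Mt_def by simp
  qed
  have mk: "snd (Mm k) \<le> mt" if "k \<in> {1..K}" for k
    unfolding mt_def using that by (intro Max_ge) auto
  show "\<exists>M::real. \<exists>m::nat. M > 0 \<and>
      (\<forall>n. cmod (f n) \<le> M * (1 + l1norm n) ^ m * (\<Sum>k=1..K. cmod (fs k n)))"
  proof (intro exI conjI allI)
    fix n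
    have "cmod (f n) \<le> (\<Sum>k=1..K. cmod (g k n * fs k n))"
      unfolding f by (rule norm_sum)
    also have "\<dots> \<le> (\<Sum>k=1..K. Mt * (1 + l1norm n) ^ mt * cmod (fs k n))"
    proof (rule sum_mono)
      fix k assume k: "k \<in> {1..K}"
      have p: "(1 + l1norm n) ^ snd (Mm k) \<le> (1 + l1norm n) ^ mt"
        using mk[OF k] by (rule pow_mono1)
      have pp: "0 \<le> (1 + l1norm n) ^ snd (Mm k)" using l1norm_nonneg[of n] by simp
      have "cmod (g k n) \<le> fst (Mm k) * (1 + l1norm n) ^ snd (Mm k)" using Mm[OF k] by auto
      also have "\<dots> \<le> Mt * (1 + l1norm n) ^ mt"
        using Mk[OF k] Mm[OF k] p pp Mt by (intro mult_mono) auto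
      finally show "cmod (g k n * fs k n) \<le> Mt * (1 + l1norm n) ^ mt * cmod (fs k n)"
        by (simp add: norm_mult mult_right_mono)
    qed
    also have "\<dots> = Mt * (1 + l1norm n) ^ mt * (\<Sum>k=1..K. cmod (fs k n))"
      by (simp add: sum_distrib_left)
    finally show "cmod (f n) \<le> Mt * (1 + l1norm n) ^ mt * (\<Sum>k=1..K. cmod (fs k n))" .
  qed (rule Mt)
next
  assume "\<exists>M::real. \<exists>m::nat. M > 0 \<and>
      (\<forall>n. cmod (f n) \<le> M * (1 + l1norm n) ^ m * (\<Sum>k=1..K. cmod (fs k n)))"
  then obtain M m where M: "M > 0" and b: "\<And>n. cmod (f n) \<le> M * (1 + l1norm n) ^ m * (\<Sum>k=1..K. cmod (fs k n))"
    by auto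
  define S where "S n = (\<Sum>k=1..K. cmod (fs k n))" for n
  define g where "g k n = f n * cnj (fs k n) / complex_of_real (cmod (fs k n) * S n)" for k n
  have Snn: "S n \<ge> 0" for n unfolding S_def by (intro sum_nonneg) auto
  have gb: "cmod (g k n) \<le> M * (1 + l1norm n) ^ m" for k n
  proof (cases "fs k n = 0 \<or> S n = 0")
    case True
    then show ?thesis using M l1norm_nonneg[of n] by (auto simp: g_def)
  next
    case False
    have "cmod (g k n) = cmod (f n) / S n"
      using False Snn[of n] by (simp add: g_def norm_divide norm_mult)
    also have "\<dots> \<le> M * (1 + l1norm n) ^ m"
      using b[of n] False Snn[of n] unfolding S_def[symmetric]
      by (simp add: divide_le_eq)
    finally show ?thesis .
  qed
  have "g k \<in> Sprime" for k unfolding Sprime_def using gb M by blast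
  moreover have "f = (\<lambda>n. \<Sum>k=1..K. g k n * fs k n)"
  proof
    fix n
    show "f n = (\<Sum>k=1..K. g k n * fs k n)"
    proof (cases "S n = 0")
      case True
      hence "cmod (f n) \<le> 0" using b[of n] unfolding S_def by simp
      hence "f n = 0" by simp
      thus ?thesis by (simp add: g_def True)
    next
      case False
      have "g k n * fs k n = f n * complex_of_real (cmod (fs k n) / S n)" for k
      proof (cases "fs k n = 0")
        case True thus ?thesis by (simp add: g_def)
      next
        case F: False
        have "cnj (fs k n) * fs k n = complex_of_real (cmod (fs k n))^2"
          by (metis complex_norm_square mult.commute of_real_power)
        thus ?thesis using F False
          by (simp add: g_def field_simps power2_eq_square)
      qed
      hence "(\<Sum>k=1..K. g k n * fs k n) = (\<Sum>k=1..K. f n * complex_of_real (cmod (fs k n) / S n))"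
        by (intro sum.cong) auto
      also have "\<dots> = f n * complex_of_real (\<Sum>k=1..K. cmod (fs k n) / S n)"
        by (simp only: sum_distrib_left of_real_sum)
      also have "(\<Sum>k=1..K. cmod (fs k n) / S n) = S n / S n"
        by (simp only: sum_divide_distrib[symmetric] S_def)
      finally have "(\<Sum>k=1..K. g k n * fs k n) = f n * complex_of_real (S n / S n)" .
      thus ?thesis using False by simp
    qed
  qed
  ultimately show "f \<in> gen_ideal K fs" unfolding gen_ideal_def mem_Collect_eq
    by (intro exI[of _ g]) blast
qed

end
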